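(* Let $Z$ be a minimal Banach space not containing an isomorphic copy of $c_0$. If $X$ is a separable Banach space not containing an isomorphic copy of $Z$, then $E_X$ does not contain an isomorphic copy of $Z$ either.
   Context: An infinite-dimensional Banach space $Z$ is minimal if every infinite-dimensional closed subspace of $Z$ contains an isomorphic copy of $Z$. For a separable Banach space $X\neq\{0\}$ and a sequence $(x_n)$ (repetitions allowed) in the unit sphere of $X$ which is norm dense in the unit sphere, $E_X$ is the completion of $c_{00}(\mathbb{N})$ under the norm $\|z\|_{E_X}=\sup_{m\in\mathbb{N}}\|\sum_{n=0}^m z(n)x_n\|_X$; for $X=\{0\}$, $E_X=c_0$. *)

theory Defs
  imports "HOL-Analysis.Analysis" "HOL-Library.Function_Algebras"
begin

instantiation "fun" :: (type, real_vector) real_vector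
begin
definition scaleR_fun :: "real \<Rightarrow> ('a \<Rightarrow> 'b) \<Rightarrow> 'a \<Rightarrow> 'b" where
  "scaleR_fun c f = (\<lambda>x. c *\<^sub>R f x)"
instance
  by standard (auto simp: scaleR_fun_def fun_eq_iff scaleR_add_right scaleR_add_left)
end

text \<open>Real Banach spaces are modelled either as types of class banach (with their norm),
  or as a carrier set of a real vector space together with a norm function on it.\<close>

definition embeds :: "'a::real_vector set \<Rightarrow> ('a \<Rightarrow> real) \<Rightarrow> 'b::real_vector set \<Rightarrow> ('b \<Rightarrow> real) \<Rightarrow> bool" where
  "embeds V N W M \<longleftrightarrow> (\<exists>T.
      (\<forall>x\<in>V. \<forall>y\<in>V. T (x + y) = T x + T y) \<and>
      (\<forall>c. \<forall>x\<in>V. T (c *\<^sub>R x) = c *\<^sub>R T x) \<and>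
      T ` V \<subseteq> W \<and>
      (\<exists>a b. 0 < a \<and> 0 < b \<and> (\<forall>x\<in>V. a * N x \<le> M (T x) \<and> M (T x) \<le> b * N x)))"

definition infinite_dimensional :: "'a::real_vector set \<Rightarrow> bool" where
  "infinite_dimensional S \<longleftrightarrow> (\<exists>B\<subseteq>S. independent B \<and> infinite B)"

definition separable_banach :: "'a::banach itself \<Rightarrow> bool" where
  "separable_banach _ \<longleftrightarrow> (\<exists>D::'a set. countable D \<and> closure D = UNIV)"

definition minimal_banach :: "'a::banach itself \<Rightarrow> bool" where
  "minimal_banach _ \<longleftrightarrow> infinite_dimensional (UNIV::'a set) \<and>
     (\<forall>S::'a set. subspace S \<and> closed S \<and> infinite_dimensional S \<longrightarrow>
        embeds (UNIV::'a set) norm S norm)"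

definition c0_set :: "(nat \<Rightarrow> real) set" where
  "c0_set = {f. f \<longlonglongrightarrow> 0}"

definition c0_norm :: "(nat \<Rightarrow> real) \<Rightarrow> real" where
  "c0_norm f = (SUP n. \<bar>f n\<bar>)"

text \<open>E_X for a sequence xs (dense in the unit sphere of X): the completion of c00 under
  the norm sup_m of the norms of partial sums, realised concretely as the space of scalar
  sequences z whose partial sums of z n xs n converge in X, with the same norm.\<close>
definition E_set :: "(nat \<Rightarrow> 'a::banach) \<Rightarrow> (nat \<Rightarrow> real) set" where
  "E_set xs = {z. convergent (\<lambda>m. \<Sum>n\<le>m. z n *\<^sub>R xs n)}"

definition E_norm :: "(nat \<Rightarrow> 'a::banach) \<Rightarrow> (nat \<Rightarrow> real) \<Rightarrow> real" where
  "E_norm xs z = (SUP m. norm (\<Sum>n\<le>m. z n *\<^sub>R xs n))"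

end

theory Submission
  imports Defs
begin


definition ldim :: "nat \<Rightarrow> 'a::real_vector set \<Rightarrow> bool" where
  "ldim n S \<longleftrightarrow> (\<exists>B\<subseteq>S. finite B \<and> independent B \<and> n \<le> card B)"

lemma infdim_ldim: "infinite_dimensional S \<longleftrightarrow> (\<forall>n. ldim n S)"
proof
  assume "infinite_dimensional S"
  then obtain B where B: "B \<subseteq> S" "independent B" "infinite B"
    unfolding infinite_dimensional_def by blast
  show "\<forall>n. ldim n S"
  proof
    fix n
    obtain C where "C \<subseteq> B" "finite C" "card C = n"
      using infinite_arbitrarily_large[OF B(3)] by blast
    then show "ldim n S" unfolding ldim_def
      using B independent_mono by (metis order_refl subset_trans)
  qed
next
  assume A: "\<forall>n. ldim n S"
  show "infinite_dimensional S"
  proof (rule ccontr)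
    assume N: "\<not> infinite_dimensional S"
    obtain B where B: "B \<subseteq> S" "independent B" "S \<subseteq> span B"
      using maximal_independent_subset by blast
    have fB: "finite B" using N B unfolding infinite_dimensional_def by blast
    obtain C where C: "C \<subseteq> S" "finite C" "independent C" "Suc (card B) \<le> card C"
      using A unfolding ldim_def by blast
    have "card C \<le> card B" using independent_span_bound[OF fB C(3)] C(1) B(3) by blast
    then show False using C(4) by simp
  qed
qed

lemma ldim_kernel:
  fixes f :: "'a::real_vector \<Rightarrow> real"
  assumes S: "subspace S" and f: "linear f" and L: "ldim (Suc n) S"
  shows "ldim n (S \<inter> {x. f x = 0})"
proof -
  obtain B where B: "B \<subseteq> S" "finite B" "independent B" "Suc n \<le> card B"
    using L unfolding ldim_def by blast
  define K where "K = span B \<inter> {x. f x = 0}"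
  obtain D where D: "D \<subseteq> K" "independent D" "K \<subseteq> span D" "card D = dim K"
    using basis_exists by blast
  have spB: "span B \<subseteq> S" using B(1) S span_minimal by blast
  have DS: "D \<subseteq> S \<inter> {x. f x = 0}" using D(1) spB K_def by auto
  have fD: "finite D" using independent_span_bound[OF B(2) D(2)] D(1) K_def by auto
  have "n \<le> card D"
  proof (cases "\<exists>b0\<in>B. f b0 \<noteq> 0")
    case True
    then obtain b0 where b0: "b0 \<in> B" "f b0 \<noteq> 0" by blast
    have "span B \<subseteq> span (insert b0 D)"
    proof
      fix x assume x: "x \<in> span B"
      define y where "y = x - (f x / f b0) *\<^sub>R b0"
      have "y \<in> span B" using x b0(1) y_def by (simp add: span_diff span_scale span_base)
      moreover have "f y = 0" using b0(2) f unfolding y_def by (simp add: linear_diff linear_scale)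
      ultimately have "y \<in> span D" using D(3) K_def by auto
      then have "y \<in> span (insert b0 D)" by (meson span_mono subset_insertI subsetD)
      moreover have "(f x / f b0) *\<^sub>R b0 \<in> span (insert b0 D)"
        by (simp add: span_base span_scale)
      ultimately have "y + (f x / f b0) *\<^sub>R b0 \<in> span (insert b0 D)" by (rule span_add)
      then show "x \<in> span (insert b0 D)" unfolding y_def by simp
    qed
    then have "card B \<le> card (insert b0 D)"
      using independent_span_bound[OF _ B(3)] fD span_superset by (meson finite_insert subset_trans)
    also have "\<dots> \<le> Suc (card D)" by (simp add: card_insert_le_m1 fD card_insert_if)
    finally show ?thesis using B(4) by simp
  next
    case False
    then have "B \<subseteq> K" unfolding K_def using span_superset by auto
    then have "card B \<le> card D" using independent_span_bound[OF fD B(3)] D(3) by blast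
    then show ?thesis using B(4) by simp
  qed
  then show ?thesis unfolding ldim_def using DS fD D(2) by blast
qed

lemma infdim_kernel:
  fixes f :: "'a::real_vector \<Rightarrow> real"
  assumes "subspace S" "linear f" "infinite_dimensional S"
  shows "infinite_dimensional (S \<inter> {x. f x = 0})"
  using assms ldim_kernel infdim_ldim by blast



lemma geom_eps: "(\<Sum>k<N. 1 / (16 * 2 ^ k) :: real) = 1/8 - 1/(8 * 2^N)"
  by (induction N) (auto simp: field_simps)

lemma geom_eps_le: "(\<Sum>k<N. 1 / (16 * 2 ^ k) :: real) \<le> 1/8"
  using geom_eps[of N] by simp

lemma geom_eps_subset:
  assumes "finite F"
  shows "(\<Sum>k\<in>F. 1 / (16 * 2 ^ k) :: real) \<le> 1/8"
proof -
  obtain N where "F \<subseteq> {..<N}" using assms finite_nat_iff_bounded by blast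
  then have "(\<Sum>k\<in>F. 1 / (16 * 2 ^ k) :: real) \<le> (\<Sum>k<N. 1 / (16 * 2 ^ k))"
    by (intro sum_mono2) auto
  then show ?thesis using geom_eps_le[of N] by linarith
qed

locale semis =
  fixes q :: "nat \<Rightarrow> 'z::banach \<Rightarrow> real"
  assumes q_add: "\<And>m x y. q m (x + y) \<le> q m x + q m y"
    and q_scale: "\<And>m c x. q m (c *\<^sub>R x) = \<bar>c\<bar> * q m x"
    and q_bdd: "\<And>x. bdd_above (range (\<lambda>m. q m x))"
begin

definition nn :: "'z \<Rightarrow> real" where "nn x = (SUP m. q m x)"

lemma q_zero: "q m 0 = 0"
  using q_scale[of m 0 0] by simp

lemma q_neg: "q m (- x) = q m x"
  using q_scale[of m "-1" x] by simp

lemma q_nonneg: "0 \<le> q m x"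
  using q_add[of m x "-x"] q_zero q_neg[of m x] by simp

lemma q_le_nn: "q m x \<le> nn x"
  unfolding nn_def by (rule cSUP_upper) (auto intro: q_bdd)

lemma q_sum: "finite F \<Longrightarrow> q m (\<Sum>k\<in>F. f k) \<le> (\<Sum>k\<in>F. q m (f k))"
proof (induction F rule: finite_induct)
  case empty then show ?case by (simp add: q_zero)
next
  case (insert a F)
  then show ?case using q_add[of m "f a" "sum f F"] by simp
qed

lemma q_diff: "q m x \<le> q m (x + y) + q m y"
  using q_add[of m "x + y" "- y"] q_neg[of m y] by simp

lemma nn_le: "(\<And>m. q m x \<le> c) \<Longrightarrow> nn x \<le> c"
  unfolding nn_def by (rule cSUP_least) auto


lemma nn_zero: "nn 0 = 0"
  unfolding nn_def by (simp add: q_zero)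

lemma nn_scale: "nn (c *\<^sub>R x) = \<bar>c\<bar> * nn x"
proof (cases "c = 0")
  case True then show ?thesis using nn_zero by simp
next
  case False
  have le1: "nn (d *\<^sub>R y) \<le> \<bar>d\<bar> * nn y" for d y
    by (rule nn_le) (simp add: q_scale q_le_nn mult_left_mono)
  have "nn x = nn (inverse c *\<^sub>R (c *\<^sub>R x))" using False by simp
  also have "\<dots> \<le> \<bar>inverse c\<bar> * nn (c *\<^sub>R x)" by (rule le1)
  finally have "\<bar>c\<bar> * nn x \<le> nn (c *\<^sub>R x)" using False
    by (simp add: field_simps abs_inverse)
  with le1[of c x] show ?thesis by simp
qed

lemma H_from:
  assumes "0 < nn u" "\<forall>m<p. q m u = 0" "\<exists>M. \<forall>m\<ge>M. q m u \<le> \<delta> * nn u"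
  shows "\<exists>u. nn u = 1 \<and> (\<forall>m<p. q m u = 0) \<and> (\<exists>M. \<forall>m\<ge>M. q m u \<le> \<delta>)"
proof -
  let ?v = "inverse (nn u) *\<^sub>R u"
  obtain M where M: "\<forall>m\<ge>M. q m u \<le> \<delta> * nn u" using assms(3) by blast
  have "nn ?v = 1" using assms(1) by (simp add: nn_scale)
  moreover have "\<forall>m<p. q m ?v = 0" using assms(2) by (simp add: q_scale)
  moreover have "\<forall>m\<ge>M. q m ?v \<le> \<delta>"
  proof (intro allI impI)
    fix m assume "M \<le> m"
    then have "q m u \<le> \<delta> * nn u" using M by blast
    then show "q m ?v \<le> \<delta>" using assms(1) by (simp add: q_scale field_simps)
  qed
  ultimately show ?thesis by blast
qed

lemma core_embed:
  assumes al: "0 < \<alpha>" and be: "0 < \<beta>"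
    and nrm: "\<And>x. \<alpha> * norm x \<le> nn x \<and> nn x \<le> \<beta> * norm x"
    and H: "\<And>p (\<delta>::real). 0 < \<delta> \<Longrightarrow> \<exists>u. nn u = 1 \<and> (\<forall>m<p. q m u = 0) \<and> (\<exists>M. \<forall>m\<ge>M. q m u \<le> \<delta>)"
  shows "embeds c0_set c0_norm (UNIV::'z set) norm"
proof -
  define eps :: "nat \<Rightarrow> real" where "eps k = 1 / (16 * 2 ^ k)" for k
  have eps_pos: "0 < eps k" for k unfolding eps_def by simp
  have eps_le: "eps k \<le> 1/16" for k unfolding eps_def by (simp add: field_simps)
  have epsF: "finite F \<Longrightarrow> (\<Sum>k\<in>F. eps k) \<le> 1/8" for F
    unfolding eps_def by (rule geom_eps_subset)
  have "\<forall>p k. \<exists>u M. nn u = 1 \<and> (\<forall>m<p. q m u = 0) \<and> (\<forall>m\<ge>M. q m u \<le> eps k)"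
    using H eps_pos by blast
  then obtain F G where FG: "\<And>p k. nn (F p k) = 1 \<and> (\<forall>m<p. q m (F p k) = 0) \<and> (\<forall>m\<ge>G p k. q m (F p k) \<le> eps k)"
    by metis
  define P where "P = rec_nat 0 (\<lambda>k pk. max (Suc pk) (G pk k))"
  have P0: "P 0 = 0" and PS: "P (Suc k) = max (Suc (P k)) (G (P k) k)" for k
    unfolding P_def by simp_all
  define u where "u k = F (P k) k" for k
  have P1: "nn (u k) = 1" for k unfolding u_def using FG by blast
  have P2: "m < P k \<Longrightarrow> q m (u k) = 0" for m k unfolding u_def using FG by blast
  have P3: "P (Suc k) \<le> m \<Longrightarrow> q m (u k) \<le> eps k" for m k unfolding u_def using FG PS
    by (metis max.bounded_iff)
  have smP: "strict_mono P" by (rule strict_monoI_Suc) (simp add: PS)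
  have Pmono: "k \<le> j \<Longrightarrow> P k \<le> P j" for k j using smP strict_mono_less_eq by blast
  have term_bd: "q m (u k) \<le> eps k + (if P k \<le> m \<and> m < P (Suc k) then 1 else 0)" for m k
  proof (cases "m < P k")
    case True then show ?thesis using P2 eps_pos[of k] by simp
  next
    case False
    show ?thesis
    proof (cases "P (Suc k) \<le> m")
      case True then show ?thesis using P3 by simp
    next
      case False2: False
      then show ?thesis using False q_le_nn[of m "u k"] P1 eps_pos[of k] by simp
    qed
  qed
  have upper: "nn (\<Sum>k\<in>A. a k *\<^sub>R u k) \<le> 2 * M"
    if A: "finite A" and M0: "0 \<le> M" and aM: "\<And>k. k \<in> A \<Longrightarrow> \<bar>a k\<bar> \<le> M" for A a M
  proof (rule nn_le)
    fix m
    define I where "I = {k\<in>A. P k \<le> m \<and> m < P (Suc k)}"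
    have "finite I" using A I_def by simp
    have "card I \<le> Suc 0"
    proof (subst card_le_Suc0_iff_eq[OF \<open>finite I\<close>], intro ballI)
      fix k1 k2 assume k: "k1 \<in> I" "k2 \<in> I"
      show "k1 = k2"
      proof (rule ccontr)
        assume "k1 \<noteq> k2"
        then consider "Suc k1 \<le> k2" | "Suc k2 \<le> k1" by linarith
        then show False
        proof cases
          case 1 then show False using k Pmono[of "Suc k1" k2] I_def by auto
        next
          case 2 then show False using k Pmono[of "Suc k2" k1] I_def by auto
        qed
      qed
    qed
    have "q m (\<Sum>k\<in>A. a k *\<^sub>R u k) \<le> (\<Sum>k\<in>A. q m (a k *\<^sub>R u k))"
      by (rule q_sum[OF A])
    also have "\<dots> = (\<Sum>k\<in>A. \<bar>a k\<bar> * q m (u k))" by (simp add: q_scale)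
    also have "\<dots> \<le> (\<Sum>k\<in>A. M * (eps k + (if P k \<le> m \<and> m < P (Suc k) then 1 else 0)))"
      by (intro sum_mono mult_mono aM term_bd) (auto simp: q_nonneg M0)
    also have "\<dots> = M * ((\<Sum>k\<in>A. eps k) + (\<Sum>k\<in>A. (if P k \<le> m \<and> m < P (Suc k) then 1 else 0)))"
      by (simp add: sum_distrib_left distrib_left sum.distrib)
    also have "(\<Sum>k\<in>A. (if P k \<le> m \<and> m < P (Suc k) then 1 else 0)) = real (card I)"
      unfolding I_def using A by (simp add: sum.If_cases Int_def conj_commute)
    also have "M * ((\<Sum>k\<in>A. eps k) + real (card I)) \<le> M * (1/8 + 1)"
      using M0 epsF[OF A] \<open>card I \<le> Suc 0\<close> by (intro mult_left_mono) auto
    also have "\<dots> \<le> 2 * M" using M0 by simp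
    finally show "q m (\<Sum>k\<in>A. a k *\<^sub>R u k) \<le> 2 * M" .
  qed
  have lower: "3/4 * \<bar>a j\<bar> - M/8 \<le> nn (\<Sum>k<K. a k *\<^sub>R u k)"
    if jK: "j < K" and M0: "0 \<le> M" and aM: "\<And>k. k < K \<Longrightarrow> \<bar>a k\<bar> \<le> M" for j K a M
  proof -
    have "3/4 < nn (u j)" using P1 by simp
    then have "\<exists>m. 3/4 < q m (u j)" unfolding nn_def
      using less_cSUP_iff[of UNIV "\<lambda>m. q m (u j)" "3/4"] q_bdd[of "u j"] by simp
    then obtain m where m: "3/4 < q m (u j)" by blast
    have m1: "P j \<le> m" using m P2[of m j] by (cases "m < P j") auto
    have m2: "m < P (Suc j)" using m P3[of j m] eps_le[of j] by (cases "P (Suc j) \<le> m") auto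
    define R where "R = {..<K} - {j}"
    have fR: "finite R" unfolding R_def by simp
    have small: "q m (u k) \<le> eps k" if "k \<in> R" for k
    proof (cases "k < j")
      case True
      then have "P (Suc k) \<le> m" using Pmono[of "Suc k" j] m1 by simp
      then show ?thesis by (rule P3)
    next
      case False
      then have "Suc j \<le> k" using that R_def by auto
      then have "m < P k" using Pmono[of "Suc j" k] m2 by simp
      then show ?thesis using P2 eps_pos[of k] by simp
    qed
    have decomp: "(\<Sum>k<K. a k *\<^sub>R u k) = a j *\<^sub>R u j + (\<Sum>k\<in>R. a k *\<^sub>R u k)"
      unfolding R_def using jK by (simp add: sum.remove)
    have "q m (\<Sum>k\<in>R. a k *\<^sub>R u k) \<le> (\<Sum>k\<in>R. q m (a k *\<^sub>R u k))" by (rule q_sum[OF fR])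
    also have "\<dots> = (\<Sum>k\<in>R. \<bar>a k\<bar> * q m (u k))" by (simp add: q_scale)
    also have "\<dots> \<le> (\<Sum>k\<in>R. M * eps k)"
      by (intro sum_mono mult_mono aM small) (auto simp: q_nonneg M0 R_def)
    also have "\<dots> = M * (\<Sum>k\<in>R. eps k)" by (simp add: sum_distrib_left)
    also have "\<dots> \<le> M * (1/8)" using epsF[OF fR] M0 by (intro mult_left_mono) auto
    finally have rest: "q m (\<Sum>k\<in>R. a k *\<^sub>R u k) \<le> M/8" by simp
    have "3/4 * \<bar>a j\<bar> \<le> \<bar>a j\<bar> * q m (u j)" using mult_left_mono[of "3/4" "q m (u j)" "\<bar>a j\<bar>"] m by (simp add: mult.commute)
    also have "\<dots> = q m (a j *\<^sub>R u j)" by (simp add: q_scale)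
    also have "\<dots> \<le> q m (\<Sum>k<K. a k *\<^sub>R u k) + q m (\<Sum>k\<in>R. a k *\<^sub>R u k)"
      unfolding decomp by (rule q_diff)
    also have "\<dots> \<le> nn (\<Sum>k<K. a k *\<^sub>R u k) + M/8" using rest q_le_nn by (simp add: add_mono)
    finally show ?thesis by simp
  qed
  have c0bd: "bdd_above (range (\<lambda>n. \<bar>a n\<bar>))" if "a \<in> c0_set" for a :: "nat \<Rightarrow> real"
  proof -
    have "convergent a" using that unfolding c0_set_def convergent_def by blast
    then have "Bseq a" by (rule convergent_imp_Bseq)
    then show ?thesis using Bseq_bdd_above'[of a] by simp
  qed
  have c0le: "\<bar>a n\<bar> \<le> c0_norm a" if "a \<in> c0_set" for a :: "nat \<Rightarrow> real" and n
    unfolding c0_norm_def by (rule cSUP_upper) (use c0bd[OF that] in auto)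
  have c0nn: "0 \<le> c0_norm a" if "a \<in> c0_set" for a :: "nat \<Rightarrow> real"
    using c0le[OF that, of 0] by simp
  have summ: "summable (\<lambda>k. a k *\<^sub>R u k)" if "a \<in> c0_set" for a :: "nat \<Rightarrow> real"
  proof (subst summable_Cauchy, intro allI impI)
    fix e :: real assume e: "0 < e"
    have "a \<longlonglongrightarrow> 0" using that unfolding c0_set_def by simp
    then obtain N where N: "\<And>n. n \<ge> N \<Longrightarrow> \<bar>a n\<bar> < e * \<alpha> / 4"
      unfolding LIMSEQ_iff using e al by (metis abs_minus_cancel diff_zero real_norm_def divide_pos_pos mult_pos_pos zero_less_numeral)
    have "norm (\<Sum>k\<in>{m..<n}. a k *\<^sub>R u k) < e" if "m \<ge> N" for m n
    proof -
      have "nn (\<Sum>k\<in>{m..<n}. a k *\<^sub>R u k) \<le> 2 * (e * \<alpha> / 4)"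
        by (rule upper) (use N that e al in \<open>auto intro: less_imp_le\<close>)
      then have "\<alpha> * norm (\<Sum>k\<in>{m..<n}. a k *\<^sub>R u k) \<le> \<alpha> * (e / 2)" using nrm[of "\<Sum>k\<in>{m..<n}. a k *\<^sub>R u k"] 
        by (simp add: algebra_simps)
      then have "norm (\<Sum>k\<in>{m..<n}. a k *\<^sub>R u k) \<le> e/2" using al by simp
      then show ?thesis using e by simp
    qed
    then show "\<exists>N. \<forall>m\<ge>N. \<forall>n. norm (\<Sum>k\<in>{m..<n}. a k *\<^sub>R u k) < e" by blast
  qed
  define \<Phi> where "\<Phi> a = (\<Sum>k. a k *\<^sub>R u k)" for a :: "nat \<Rightarrow> real"
  have lim: "(\<lambda>N. \<Sum>k<N. a k *\<^sub>R u k) \<longlonglongrightarrow> \<Phi> a" if "a \<in> c0_set" for a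
    unfolding \<Phi>_def by (rule summable_LIMSEQ[OF summ[OF that]])
  have add: "\<Phi> (x + y) = \<Phi> x + \<Phi> y" if "x \<in> c0_set" "y \<in> c0_set" for x y
    unfolding \<Phi>_def using suminf_add[OF summ[OF that(1)] summ[OF that(2)]]
    by (simp add: scaleR_add_left)
  have scl: "\<Phi> (c *\<^sub>R x) = c *\<^sub>R \<Phi> x" if "x \<in> c0_set" for x c
    unfolding \<Phi>_def scaleR_fun_def
    using bounded_linear.suminf[OF bounded_linear_scaleR_right summ[OF that], of c]
    by simp
  have ub: "norm (\<Phi> a) \<le> (2/\<alpha>) * c0_norm a" if a: "a \<in> c0_set" for a
  proof (rule tendsto_upperbound[OF tendsto_norm[OF lim[OF a]]])
    show "\<forall>\<^sub>F N in sequentially. norm (\<Sum>k<N. a k *\<^sub>R u k) \<le> 2 / \<alpha> * c0_norm a"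
    proof (rule always_eventually, intro allI)
      fix N
      have "nn (\<Sum>k<N. a k *\<^sub>R u k) \<le> 2 * c0_norm a"
        by (rule upper) (use c0le[OF a] c0nn[OF a] in auto)
      then have "\<alpha> * norm (\<Sum>k<N. a k *\<^sub>R u k) \<le> 2 * c0_norm a" using nrm[of "\<Sum>k<N. a k *\<^sub>R u k"] by linarith
      then show "norm (\<Sum>k<N. a k *\<^sub>R u k) \<le> 2 / \<alpha> * c0_norm a" using al
        by (simp add: field_simps)
    qed
  qed simp
  have lb: "5 / (8 * \<beta>) * c0_norm a \<le> norm (\<Phi> a)" if a: "a \<in> c0_set" for a
  proof -
    let ?C = "c0_norm a"
    have j: "(3/4 * \<bar>a j\<bar> - ?C/8) / \<beta> \<le> norm (\<Phi> a)" for j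
    proof (rule tendsto_lowerbound[OF tendsto_norm[OF lim[OF a]]])
      show "\<forall>\<^sub>F N in sequentially. (3/4 * \<bar>a j\<bar> - ?C/8) / \<beta> \<le> norm (\<Sum>k<N. a k *\<^sub>R u k)"
        unfolding eventually_sequentially
      proof (intro exI allI impI)
        fix N assume "Suc j \<le> N"
        then have "3/4 * \<bar>a j\<bar> - ?C/8 \<le> nn (\<Sum>k<N. a k *\<^sub>R u k)"
          by (intro lower) (use c0le[OF a] c0nn[OF a] in auto)
        also have "\<dots> \<le> \<beta> * norm (\<Sum>k<N. a k *\<^sub>R u k)" using nrm by blast
        finally show "(3/4 * \<bar>a j\<bar> - ?C/8) / \<beta> \<le> norm (\<Sum>k<N. a k *\<^sub>R u k)"
          using be by (simp add: field_simps)
      qed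
    qed simp
    have bnd: "\<bar>a j\<bar> \<le> 4/3 * (\<beta> * norm (\<Phi> a) + ?C/8)" for j
    proof -
      have "3/4 * \<bar>a j\<bar> - ?C/8 \<le> \<beta> * norm (\<Phi> a)" using j[of j] be by (simp add: field_simps)
      then show ?thesis by simp
    qed
    have "?C \<le> 4/3 * (\<beta> * norm (\<Phi> a) + ?C/8)"
      using cSUP_least[of UNIV "\<lambda>j. \<bar>a j\<bar>" "4/3 * (\<beta> * norm (\<Phi> a) + ?C/8)"] bnd
      by (simp add: c0_norm_def)
    then have "5 * ?C \<le> 8 * (\<beta> * norm (\<Phi> a))" by simp
    then show ?thesis using be by (simp add: field_simps)
  qed
  show ?thesis unfolding embeds_def
    apply (rule exI[of _ \<Phi>])
    apply (intro conjI ballI allI)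
    using add scl apply auto[2]
     apply simp
    apply (rule exI[of _ "5 / (8 * \<beta>)"], rule exI[of _ "2/\<alpha>"])
    using lb ub al be by auto
qed

end



lemma T_lin:
  fixes T :: "'z::real_vector \<Rightarrow> nat \<Rightarrow> real"
  assumes add: "\<And>x y. T (x + y) = T x + T y" and scl: "\<And>c x. T (c *\<^sub>R x) = c *\<^sub>R T x"
  shows "T 0 = 0" "T (x + y) n = T x n + T y n" "T (c *\<^sub>R x) n = c * T x n" "linear (\<lambda>u. T u n)"
proof -
  show "T 0 = 0" using scl[of 0 0] by simp
  show "T (x + y) n = T x n + T y n" using add by simp
  show "T (c *\<^sub>R x) n = c * T x n" using scl by (simp add: scaleR_fun_def)
  show "linear (\<lambda>u. T u n)" by (rule linearI) (simp_all add: add scl scaleR_fun_def)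
qed

lemma K_subspace:
  fixes T :: "'z::real_vector \<Rightarrow> nat \<Rightarrow> real"
  assumes add: "\<And>x y. T (x + y) = T x + T y" and scl: "\<And>c x. T (c *\<^sub>R x) = c *\<^sub>R T x"
  shows "subspace {u. \<forall>n<p. T u n = 0}"
  unfolding subspace_def using T_lin[OF add scl] by simp

lemma K_infdim:
  fixes T :: "'z::real_vector \<Rightarrow> nat \<Rightarrow> real"
  assumes add: "\<And>x y. T (x + y) = T x + T y" and scl: "\<And>c x. T (c *\<^sub>R x) = c *\<^sub>R T x"
    and inf: "infinite_dimensional (UNIV::'z set)"
  shows "infinite_dimensional {u. \<forall>n<p. T u n = 0}"
proof (induction p)
  case 0 then show ?case using inf by simp
next
  case (Suc p)
  have "{u. \<forall>n<Suc p. T u n = 0} = {u. \<forall>n<p. T u n = 0} \<inter> {u. T u p = 0}"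
    by (auto simp: less_Suc_eq)
  then show ?case
    using infdim_kernel[OF K_subspace[OF add scl] T_lin(4)[OF add scl] Suc] by simp
qed

lemma infdim_nonzero: "infinite_dimensional S \<Longrightarrow> \<exists>u\<in>S. u \<noteq> 0"
proof -
  assume "infinite_dimensional S"
  then obtain B where B: "B \<subseteq> S" "independent B" "infinite B"
    unfolding infinite_dimensional_def by blast
  then obtain b where b: "b \<in> B" by (metis ex_in_conv finite.emptyI)
  have "b \<noteq> 0" using b B(2) dependent_zero by blast
  then show ?thesis using b B(1) by blast
qed

lemma part1:
  assumes minZ: "minimal_banach TYPE('z::banach)"
    and noc0: "\<not> embeds c0_set c0_norm (UNIV::'z set) norm"
  shows "\<not> embeds (UNIV::'z set) norm c0_set c0_norm"
proof
  assume E: "embeds (UNIV::'z set) norm c0_set c0_norm"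
  obtain T :: "'z \<Rightarrow> nat \<Rightarrow> real" where T:
      "(\<forall>x\<in>UNIV. \<forall>y\<in>UNIV. T (x + y) = T x + T y) \<and>
      (\<forall>c. \<forall>x\<in>UNIV. T (c *\<^sub>R x) = c *\<^sub>R T x) \<and>
      T ` UNIV \<subseteq> c0_set \<and>
      (\<exists>a b. 0 < a \<and> 0 < b \<and> (\<forall>x\<in>UNIV. a * norm x \<le> c0_norm (T x) \<and> c0_norm (T x) \<le> b * norm x))"
    using E unfolding embeds_def by (elim exE) (rule that)
  then obtain \<alpha> \<beta> where al: "0 < \<alpha>" and be: "0 < \<beta>"
    and bds0: "\<forall>x\<in>UNIV. \<alpha> * norm x \<le> c0_norm (T x) \<and> c0_norm (T x) \<le> \<beta> * norm x"
    by (elim conjE exE)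
  have add: "\<And>x y. T (x + y) = T x + T y" and scl: "\<And>c x. T (c *\<^sub>R x) = c *\<^sub>R T x"
    and rng0: "T ` UNIV \<subseteq> c0_set" using T by simp_all
  have bds: "\<And>x. \<alpha> * norm x \<le> c0_norm (T x) \<and> c0_norm (T x) \<le> \<beta> * norm x" using bds0 by simp
  have rng: "T x \<in> c0_set" for x using rng0 by blast
  have inf: "infinite_dimensional (UNIV::'z set)" using minZ unfolding minimal_banach_def by blast
  note TL = T_lin[OF add scl]
  have bd: "bdd_above (range (\<lambda>m. \<bar>T x m\<bar>))" for x
  proof -
    have "convergent (T x)" using rng[of x] unfolding c0_set_def convergent_def by blast
    then have "Bseq (T x)" by (rule convergent_imp_Bseq)
    then show ?thesis using Bseq_bdd_above'[of "T x"] by simp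
  qed
  interpret S: semis "\<lambda>m x. \<bar>T x m\<bar>"
    by unfold_locales (simp_all add: TL abs_mult bd)
  have nnE: "S.nn x = c0_norm (T x)" for x unfolding S.nn_def c0_norm_def by simp
  have "embeds c0_set c0_norm (UNIV::'z set) norm"
  proof (rule S.core_embed[OF al be])
    show "\<alpha> * norm x \<le> S.nn x \<and> S.nn x \<le> \<beta> * norm x" for x using bds nnE by simp
    fix p :: nat and \<delta> :: real assume d: "0 < \<delta>"
    obtain u where u: "u \<in> {u. \<forall>n<p. T u n = 0}" "u \<noteq> 0"
      using infdim_nonzero[OF K_infdim[OF add scl inf]] by blast
    have "0 < \<alpha> * norm u" using u(2) al by simp
    then have pos: "0 < S.nn u" using bds[of u] nnE[of u] by linarith
    have "T u \<longlonglongrightarrow> 0" using rng[of u] unfolding c0_set_def by simp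
    moreover have "0 < \<delta> * S.nn u" using d pos by simp
    ultimately obtain M where "\<forall>m\<ge>M. norm (T u m - 0) < \<delta> * S.nn u"
      unfolding LIMSEQ_iff by blast
    then have "\<exists>M. \<forall>m\<ge>M. \<bar>T u m\<bar> \<le> \<delta> * S.nn u" by (auto intro: less_imp_le)
    then show "\<exists>u. S.nn u = 1 \<and> (\<forall>m<p. \<bar>T u m\<bar> = 0) \<and> (\<exists>M. \<forall>m\<ge>M. \<bar>T u m\<bar> \<le> \<delta>)"
      using S.H_from[OF pos, of p \<delta>] u(1) by simp
  qed
  then show False using noc0 by blast
qed

lemma part2:
  fixes xs :: "nat \<Rightarrow> 'x::banach"
  assumes minZ: "minimal_banach TYPE('z::banach)"
    and noc0: "\<not> embeds c0_set c0_norm (UNIV::'z set) norm"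
    and noX: "\<not> embeds (UNIV::'z set) norm (UNIV::'x set) norm"
    and sph: "range xs \<subseteq> sphere 0 1"
  shows "\<not> embeds (UNIV::'z set) norm (E_set xs) (E_norm xs)"
proof
  assume E: "embeds (UNIV::'z set) norm (E_set xs) (E_norm xs)"
  obtain T :: "'z \<Rightarrow> nat \<Rightarrow> real" where T:
      "(\<forall>x\<in>UNIV. \<forall>y\<in>UNIV. T (x + y) = T x + T y) \<and>
      (\<forall>c. \<forall>x\<in>UNIV. T (c *\<^sub>R x) = c *\<^sub>R T x) \<and>
      T ` UNIV \<subseteq> E_set xs \<and>
      (\<exists>a b. 0 < a \<and> 0 < b \<and> (\<forall>x\<in>UNIV. a * norm x \<le> E_norm xs (T x) \<and> E_norm xs (T x) \<le> b * norm x))"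
    using E unfolding embeds_def by (elim exE) (rule that)
  then obtain \<alpha> \<beta> where al: "0 < \<alpha>" and be: "0 < \<beta>"
    and bds0: "\<forall>x\<in>UNIV. \<alpha> * norm x \<le> E_norm xs (T x) \<and> E_norm xs (T x) \<le> \<beta> * norm x"
    by (elim conjE exE)
  have add: "\<And>x y. T (x + y) = T x + T y" and scl: "\<And>c x. T (c *\<^sub>R x) = c *\<^sub>R T x"
    and rng0: "T ` UNIV \<subseteq> E_set xs" using T by simp_all
  have bds: "\<And>x. \<alpha> * norm x \<le> E_norm xs (T x) \<and> E_norm xs (T x) \<le> \<beta> * norm x" using bds0 by simp
  have rng: "T x \<in> E_set xs" for x using rng0 by blast
  have inf: "infinite_dimensional (UNIV::'z set)" using minZ unfolding minimal_banach_def by blast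
  note TL = T_lin[OF add scl]
  have nx: "norm (xs n) = 1" for n using sph by (auto simp: subset_iff)
  define P where "P m x = (\<Sum>i\<le>m. T x i *\<^sub>R xs i)" for m x
  have conv: "convergent (\<lambda>m. P m x)" for x using rng[of x] unfolding E_set_def P_def by simp
  have bd: "bdd_above (range (\<lambda>m. norm (P m x)))" for x
    using Bseq_bdd_above'[OF convergent_imp_Bseq[OF conv[of x]]] by simp
  have Padd: "P m (x + y) = P m x + P m y" for m x y
    unfolding P_def by (simp add: TL scaleR_add_left sum.distrib)
  have Pscl: "P m (c *\<^sub>R x) = c *\<^sub>R P m x" for m c x
    unfolding P_def by (simp add: TL scaleR_sum_right)
  interpret S: semis "\<lambda>m x. norm (P m x)"
  proof
    show "norm (P m (x + y)) \<le> norm (P m x) + norm (P m y)" for m x y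
      unfolding Padd by (rule norm_triangle_ineq)
    show "norm (P m (c *\<^sub>R x)) = \<bar>c\<bar> * norm (P m x)" for m c x
      unfolding Pscl by simp
    show "bdd_above (range (\<lambda>m. norm (P m x)))" for x by (rule bd)
  qed
  have nnE: "S.nn x = E_norm xs (T x)" for x unfolding S.nn_def E_norm_def by (simp add: P_def)
  define Sx where "Sx x = lim (\<lambda>m. P m x)" for x
  have Slim: "(\<lambda>m. P m x) \<longlonglongrightarrow> Sx x" for x
    unfolding Sx_def using conv convergent_LIMSEQ_iff by blast
  have Sadd: "Sx (x + y) = Sx x + Sx y" for x y
    using LIMSEQ_unique[OF Slim[of "x + y"]] tendsto_add[OF Slim[of x] Slim[of y]]
    unfolding Padd by blast
  have Sscl: "Sx (c *\<^sub>R x) = c *\<^sub>R Sx x" for c x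
    using LIMSEQ_unique[OF Slim[of "c *\<^sub>R x"]] tendsto_scaleR[OF tendsto_const[of c] Slim[of x]]
    unfolding Pscl by blast
  have Sle: "norm (Sx x) \<le> S.nn x" for x
    by (rule tendsto_upperbound[OF tendsto_norm[OF Slim[of x]]]) (simp_all add: S.q_le_nn)
  have coord: "\<bar>T u n\<bar> \<le> 2 * S.nn u" for u n
  proof (cases n)
    case 0
    have "\<bar>T u n\<bar> = norm (P 0 u)" unfolding P_def 0 using nx by simp
    then show ?thesis using S.q_le_nn[of 0 u] S.q_nonneg[of 0 u] by linarith
  next
    case (Suc k)
    have "T u n *\<^sub>R xs n = P n u - P k u" unfolding P_def Suc by simp
    then have "\<bar>T u n\<bar> = norm (P n u - P k u)" using nx by (metis norm_scaleR mult.right_neutral real_norm_def)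
    also have "\<dots> \<le> norm (P n u) + norm (P k u)" by (rule norm_triangle_ineq4)
    finally show ?thesis using S.q_le_nn[of n u] S.q_le_nn[of k u] by linarith
  qed
  have blin: "bounded_linear (\<lambda>u. T u n)" for n
  proof (rule bounded_linear_intro[where K = "2 * \<beta>"])
    show "T (x + y) n = T x n + T y n" for x y by (simp add: TL)
    show "T (r *\<^sub>R x) n = r *\<^sub>R T x n" for r x by (simp add: TL)
    show "norm (T x n) \<le> norm x * (2 * \<beta>)" for x
      using coord[of x n] bds[of x] nnE[of x] by (simp add: algebra_simps)
  qed
  have Kclosed: "closed {u. \<forall>n<p. T u n = 0}" for p
  proof -
    have "{u. \<forall>n<p. T u n = 0} = (\<Inter>n\<in>{..<p}. {u. T u n = 0})" by auto
    moreover have "closed {u. T u n = 0}" for n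
      by (rule closed_Collect_eq) (simp_all add: linear_continuous_on[OF blin])
    ultimately show ?thesis by auto
  qed
  have key: "\<exists>u\<in>{u. \<forall>n<p. T u n = 0}. u \<noteq> 0 \<and> norm (Sx u) < \<delta> * S.nn u"
    if d: "0 < \<delta>" for p \<delta>
  proof (rule ccontr)
    assume N: "\<not> ?thesis"
    let ?K = "{u. \<forall>n<p. T u n = 0}"
    have low: "\<delta> * S.nn u \<le> norm (Sx u)" if "u \<in> ?K" for u
    proof (cases "u = 0")
      case True then show ?thesis using S.nn_zero by simp
    next
      case False then show ?thesis using N that by force
    qed
    have "embeds (UNIV::'z set) norm ?K norm"
      using minZ K_subspace[OF add scl] Kclosed K_infdim[OF add scl inf]
      unfolding minimal_banach_def by blast
    then obtain R :: "'z \<Rightarrow> 'z" where R: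
      "(\<forall>x\<in>UNIV. \<forall>y\<in>UNIV. R (x + y) = R x + R y) \<and>
      (\<forall>c. \<forall>x\<in>UNIV. R (c *\<^sub>R x) = c *\<^sub>R R x) \<and>
      R ` UNIV \<subseteq> ?K \<and>
      (\<exists>a b. 0 < a \<and> 0 < b \<and> (\<forall>x\<in>UNIV. a * norm x \<le> norm (R x) \<and> norm (R x) \<le> b * norm x))"
      unfolding embeds_def by (elim exE) (rule that)
    then obtain a' b' where a': "0 < a'" and b': "0 < b'"
      and Rb0: "\<forall>x\<in>UNIV. a' * norm x \<le> norm (R x) \<and> norm (R x) \<le> b' * norm x"
      by (elim conjE exE)
    have Radd: "R (x + y) = R x + R y" and Rscl: "R (c *\<^sub>R x) = c *\<^sub>R R x"
      and Rb: "a' * norm x \<le> norm (R x) \<and> norm (R x) \<le> b' * norm x"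
      for x y c using R Rb0 by auto
    have RK: "R x \<in> ?K" for x using R by (meson UNIV_I image_subset_iff)
    have "embeds (UNIV::'z set) norm (UNIV::'x set) norm"
      unfolding embeds_def
    proof (intro exI[of _ "\<lambda>x. Sx (R x)"] conjI ballI allI)
      show "Sx (R (x + y)) = Sx (R x) + Sx (R y)" for x y by (simp add: Radd Sadd)
      show "Sx (R (c *\<^sub>R x)) = c *\<^sub>R Sx (R x)" for c x by (simp add: Rscl Sscl)
      show "(\<lambda>x. Sx (R x)) ` UNIV \<subseteq> UNIV" by simp
      show "\<exists>a b. 0 < a \<and> 0 < b \<and> (\<forall>x\<in>UNIV. a * norm x \<le> norm (Sx (R x)) \<and> norm (Sx (R x)) \<le> b * norm x)"
      proof (intro exI conjI ballI)
        show "0 < \<delta> * \<alpha> * a'" using d al a' by simp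
        show "0 < \<beta> * b'" using be b' by simp
        fix x
        have l1: "\<delta> * S.nn (R x) \<le> norm (Sx (R x))" using low[OF RK[of x]] .
        have l2: "\<alpha> * norm (R x) \<le> S.nn (R x)" using bds[of "R x"] nnE by simp
        have l3: "S.nn (R x) \<le> \<beta> * norm (R x)" using bds[of "R x"] nnE by simp
        have "\<delta> * \<alpha> * a' * norm x \<le> \<delta> * \<alpha> * norm (R x)"
          using Rb[of x] d al by (simp add: mult_left_mono mult.assoc)
        also have "\<dots> \<le> \<delta> * S.nn (R x)" using l2 d by (simp add: mult.assoc)
        finally show "\<delta> * \<alpha> * a' * norm x \<le> norm (Sx (R x))" using l1 by linarith
        have "norm (Sx (R x)) \<le> \<beta> * norm (R x)" using Sle[of "R x"] l3 by linarith
        also have "\<dots> \<le> \<beta> * (b' * norm x)" using Rb[of x] be by (simp add: mult_left_mono)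
        finally show "norm (Sx (R x)) \<le> \<beta> * b' * norm x" by (simp add: mult.assoc)
      qed
    qed
    then show False using noX by blast
  qed
  have "embeds c0_set c0_norm (UNIV::'z set) norm"
  proof (rule S.core_embed[OF al be])
    show "\<alpha> * norm x \<le> S.nn x \<and> S.nn x \<le> \<beta> * norm x" for x using bds nnE by simp
    fix p :: nat and \<delta> :: real assume d: "0 < \<delta>"
    obtain u where u: "u \<in> {u. \<forall>n<p. T u n = 0}" "u \<noteq> 0" "norm (Sx u) < \<delta> * S.nn u"
      using key[OF d] by blast
    have "0 < \<alpha> * norm u" using u(2) al by simp
    then have pos: "0 < S.nn u" using bds[of u] nnE[of u] by linarith
    have q0: "\<forall>m<p. norm (P m u) = 0" using u(1) unfolding P_def by simp
    have "eventually (\<lambda>m. norm (P m u) < \<delta> * S.nn u) sequentially"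
      by (rule order_tendstoD(2)[OF tendsto_norm[OF Slim[of u]] u(3)])
    then have "\<exists>M. \<forall>m\<ge>M. norm (P m u) \<le> \<delta> * S.nn u"
      unfolding eventually_sequentially by (auto intro: less_imp_le)
    then show "\<exists>u. S.nn u = 1 \<and> (\<forall>m<p. norm (P m u) = 0) \<and> (\<exists>M. \<forall>m\<ge>M. norm (P m u) \<le> \<delta>)"
      using S.H_from[OF pos q0] by simp
  qed
  then show False using noc0 by blast
qed

theorem corollary25:
  assumes "minimal_banach TYPE('z::banach)"
    and "\<not> embeds c0_set c0_norm (UNIV::'z set) norm"
    and "separable_banach TYPE('x::banach)"
    and "\<not> embeds (UNIV::'z set) norm (UNIV::'x set) norm"
  shows "((UNIV::'x set) = {0} \<longrightarrow> \<not> embeds (UNIV::'z set) norm c0_set c0_norm) \<and>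
         (\<forall>xs::nat \<Rightarrow> 'x. range xs \<subseteq> sphere 0 1 \<and> sphere 0 1 \<subseteq> closure (range xs)
            \<longrightarrow> \<not> embeds (UNIV::'z set) norm (E_set xs) (E_norm xs))"
  using part1[OF assms(1,2)] part2[OF assms(1,2,4)] by blast

end
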